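(* Let $M$ be a structure in a countable vocabulary $L$ and let $\phi$ be a first order $L$-sentence in negation normal form. There is a mapping $\Phi$ such that for every strategy $\tau$ of Eloise in the evaluation game $G(M,\phi)$, $\Phi(\tau)$ is a strategy of Eloise in the model existence game $\mathrm{MEG}(\phi)$. If $\tau$ is a winning strategy, then so is $\Phi(\tau)$.
   Context: An assignment into a set $X$ is a map from a finite set of variables into $X$; $s(a/x)$ denotes the assignment agreeing with $s$ except that it sends $x$ to $a$. A formula is in negation normal form if negation occurs only in front of atomic formulas; the connectives are $\neg,\wedge,\vee,\forall,\exists$. Evaluation game $G(M,\phi)$: players Abelard and Eloise. Positions are pairs $(\psi,s)$ with $\psi$ a subformula of $\phi$ and $s$ an assignment into $M$; initial position $(\phi,\emptyset)$. At $(\psi,s)$: if $\psi$ is a literal, the game ends and Eloise wins iff $s$ satisfies $\psi$ in $M$; if $\psi=\psi_0\wedge\psi_1$, Abelard chooses the next position $(\psi_0,s)$ or $(\psi_1,s)$; if $\psi=\psi_0\vee\psi_1$, Eloise chooses it; if $\psi=\forall x\theta$, Abelard chooses $a\in M$ and the next position is $(\theta,s(a/x))$; if $\psi=\exists x\theta$, Eloise chooses $a\in M$ and the next position is $(\theta,s(a/x))$. A strategy is winning if its player wins every play following it. Model existence game $\mathrm{MEG}(\phi)$: let $C=\{c_0,c_1,\ldots\}$ be a countable set of new distinct constant symbols; a $C$-assignment is an assignment into $C$. Positions are finite sets $S$ of pairs $(\psi,s)$ with $\psi$ a subformula of $\phi$ and $s$ a $C$-assignment; the initial position is $\{(\phi,\emptyset)\}$.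 At each move, given the position $S$, Abelard selects a pair in $S$ and one of the following applies: if $(\psi_0\wedge\psi_1,s)\in S$, Abelard may decide that the next position is $S\cup\{(\psi_0,s)\}$ or $S\cup\{(\psi_1,s)\}$; if $(\psi_0\vee\psi_1,s)\in S$, Abelard may demand that Eloise choose whether the next position is $S\cup\{(\psi_0,s)\}$ or $S\cup\{(\psi_1,s)\}$; if $(\forall x\theta,s)\in S$, Abelard may choose $n\in\mathbb N$ and the next position is $S\cup\{(\theta,s(c_n/x))\}$; if $(\exists x\theta,s)\in S$, Abelard may demand that Eloise choose some $c_n$, and the next position is $S\cup\{(\theta,s(c_n/x))\}$. Abelard wins if at some point the position contains both $(\psi,s)$ and $(\neg\psi,s')$ with $\psi$ atomic and $s(x)=s'(x)$ for all variables $x$ of $\psi$. Otherwise (the game continuing for infinitely many moves) Eloise wins. *)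

theory Defs
  imports "HOL-Library.Countable"
begin

text \<open>Function symbols (including constants, as 0-ary functions) have type 'f,
  relation symbols type 'r; variables are natural numbers.\<close>

datatype 'f tm = Var nat | Fn 'f "'f tm list"

datatype ('f, 'r) atom = Eq "'f tm" "'f tm" | Rel 'r "'f tm list"

text \<open>Formulas in negation normal form: negation only in front of atoms.
  \<open>Lit True a\<close> is the atom \<open>a\<close>, \<open>Lit False a\<close> is \<open>\<not> a\<close>.\<close>
datatype ('f, 'r) fm =
    Lit bool "('f, 'r) atom"
  | And "('f, 'r) fm" "('f, 'r) fm"
  | Or "('f, 'r) fm" "('f, 'r) fm"
  | All nat "('f, 'r) fm"
  | Ex nat "('f, 'r) fm"

fun vars_tm :: "'f tm \<Rightarrow> nat set" where
  "vars_tm (Var x) = {x}"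
| "vars_tm (Fn f ts) = (\<Union>t\<in>set ts. vars_tm t)"

fun vars_atom :: "('f, 'r) atom \<Rightarrow> nat set" where
  "vars_atom (Eq t u) = vars_tm t \<union> vars_tm u"
| "vars_atom (Rel r ts) = (\<Union>t\<in>set ts. vars_tm t)"

fun free_vars :: "('f, 'r) fm \<Rightarrow> nat set" where
  "free_vars (Lit b a) = vars_atom a"
| "free_vars (And p q) = free_vars p \<union> free_vars q"
| "free_vars (Or p q) = free_vars p \<union> free_vars q"
| "free_vars (All x p) = free_vars p - {x}"
| "free_vars (Ex x p) = free_vars p - {x}"

definition sentence :: "('f, 'r) fm \<Rightarrow> bool" where
  "sentence \<phi> \<longleftrightarrow> free_vars \<phi> = {}"

text \<open>A structure with universe the (nonempty) type 'a.\<close>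
datatype ('f, 'r, 'a) struc =
  Struc (fun_of: "'f \<Rightarrow> 'a list \<Rightarrow> 'a") (rel_of: "'r \<Rightarrow> 'a list \<Rightarrow> bool")

fun eval_tm :: "('f, 'r, 'a) struc \<Rightarrow> (nat \<rightharpoonup> 'a) \<Rightarrow> 'f tm \<Rightarrow> 'a" where
  "eval_tm M s (Var x) = the (s x)"
| "eval_tm M s (Fn f ts) = fun_of M f (map (eval_tm M s) ts)"

fun holds_atom :: "('f, 'r, 'a) struc \<Rightarrow> (nat \<rightharpoonup> 'a) \<Rightarrow> ('f, 'r) atom \<Rightarrow> bool" where
  "holds_atom M s (Eq t u) = (eval_tm M s t = eval_tm M s u)"
| "holds_atom M s (Rel r ts) = rel_of M r (map (eval_tm M s) ts)"

type_synonym ('f, 'r, 'a) eg_pos = "('f, 'r) fm \<times> (nat \<rightharpoonup> 'a)"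

fun eg_next :: "('f, 'r, 'a) eg_pos \<Rightarrow> ('f, 'r, 'a) eg_pos \<Rightarrow> bool" where
  "eg_next (Lit b a, s) q = False"
| "eg_next (And p0 p1, s) q = (q = (p0, s) \<or> q = (p1, s))"
| "eg_next (Or p0 p1, s) q = (q = (p0, s) \<or> q = (p1, s))"
| "eg_next (All x p, s) q = (\<exists>a. q = (p, s(x \<mapsto> a)))"
| "eg_next (Ex x p, s) q = (\<exists>a. q = (p, s(x \<mapsto> a)))"

fun eg_eloise_turn :: "('f, 'r) fm \<Rightarrow> bool" where
  "eg_eloise_turn (Or p q) = True"
| "eg_eloise_turn (Ex x p) = True"
| "eg_eloise_turn _ = False"

fun is_lit :: "('f, 'r) fm \<Rightarrow> bool" where
  "is_lit (Lit b a) = True"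
| "is_lit _ = False"

text \<open>Eloise's strategies map histories (nonempty lists of positions, the last
  being the current one) to the next position.\<close>
type_synonym ('f, 'r, 'a) eg_strat = "('f, 'r, 'a) eg_pos list \<Rightarrow> ('f, 'r, 'a) eg_pos"

definition eg_play ::
  "('f, 'r) fm \<Rightarrow> ('f, 'r, 'a) eg_strat \<Rightarrow> ('f, 'r, 'a) eg_pos list \<Rightarrow> bool" where
  "eg_play \<phi> \<tau> ps \<longleftrightarrow> ps \<noteq> [] \<and> ps ! 0 = (\<phi>, Map.empty) \<and>
     (\<forall>i. Suc i < length ps \<longrightarrow>
        eg_next (ps ! i) (ps ! Suc i) \<and>
        (eg_eloise_turn (fst (ps ! i)) \<longrightarrow> ps ! Suc i = \<tau> (take (Suc i) ps)))"

definition eg_strategy :: "('f, 'r) fm \<Rightarrow> ('f, 'r, 'a) eg_strat \<Rightarrow> bool" where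
  "eg_strategy \<phi> \<tau> \<longleftrightarrow>
     (\<forall>ps. eg_play \<phi> \<tau> ps \<and> eg_eloise_turn (fst (last ps)) \<longrightarrow> eg_next (last ps) (\<tau> ps))"

text \<open>Every play is finite and ends at a literal; Eloise wins iff the literal is
  satisfied.\<close>
definition eg_winning ::
  "('f, 'r, 'a) struc \<Rightarrow> ('f, 'r) fm \<Rightarrow> ('f, 'r, 'a) eg_strat \<Rightarrow> bool" where
  "eg_winning M \<phi> \<tau> \<longleftrightarrow> eg_strategy \<phi> \<tau> \<and>
     (\<forall>ps b a. eg_play \<phi> \<tau> ps \<and> fst (last ps) = Lit b a \<longrightarrow>
        (b = holds_atom M (snd (last ps)) a))"

text \<open>The new constants C = {c_0, c_1, ...} are represented by their indices;
  a C-assignment is a finite partial map from variables to indices.\<close>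
type_synonym ('f, 'r) meg_pair = "('f, 'r) fm \<times> (nat \<rightharpoonup> nat)"
type_synonym ('f, 'r) meg_pos = "('f, 'r) meg_pair set"

text \<open>Abelard's moves: he selects a pair of the current position and either
  decides himself (conjunction: which conjunct; universal: the index n) or
  demands a choice from Eloise (disjunction, existential).\<close>
datatype ('f, 'r) amove =
    AConj "('f, 'r) fm" "('f, 'r) fm" "nat \<rightharpoonup> nat" bool
  | ADisj "('f, 'r) fm" "('f, 'r) fm" "nat \<rightharpoonup> nat"
  | AAll nat "('f, 'r) fm" "nat \<rightharpoonup> nat" nat
  | AEx nat "('f, 'r) fm" "nat \<rightharpoonup> nat"

fun meg_abelard_ok :: "('f, 'r) meg_pos \<Rightarrow> ('f, 'r) amove \<Rightarrow> bool" where
  "meg_abelard_ok S (AConj p0 p1 s b) = ((And p0 p1, s) \<in> S)"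
| "meg_abelard_ok S (ADisj p0 p1 s) = ((Or p0 p1, s) \<in> S)"
| "meg_abelard_ok S (AAll x p s n) = ((All x p, s) \<in> S)"
| "meg_abelard_ok S (AEx x p s) = ((Ex x p, s) \<in> S)"

fun eloise_demand :: "('f, 'r) amove \<Rightarrow> bool" where
  "eloise_demand (ADisj p0 p1 s) = True"
| "eloise_demand (AEx x p s) = True"
| "eloise_demand _ = False"

fun meg_eloise_ok :: "('f, 'r) meg_pos \<Rightarrow> ('f, 'r) amove \<Rightarrow> ('f, 'r) meg_pos \<Rightarrow> bool" where
  "meg_eloise_ok S (ADisj p0 p1 s) S' =
     (S' = S \<union> {(p0, s)} \<or> S' = S \<union> {(p1, s)})"
| "meg_eloise_ok S (AEx x p s) S' = (\<exists>n. S' = S \<union> {(p, s(x \<mapsto> n))})"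
| "meg_eloise_ok S _ S' = False"

text \<open>A history is a nonempty list of rounds (position, Abelard's move at it);
  Eloise's strategy maps a history whose last move is a demand to the next
  position.\<close>
type_synonym ('f, 'r) meg_strat = "(('f, 'r) meg_pos \<times> ('f, 'r) amove) list \<Rightarrow> ('f, 'r) meg_pos"

definition meg_step ::
  "('f, 'r) meg_strat \<Rightarrow> (('f, 'r) meg_pos \<times> ('f, 'r) amove) list \<Rightarrow> ('f, 'r) meg_pos \<Rightarrow> bool" where
  "meg_step \<sigma> h S' \<longleftrightarrow> (case snd (last h) of
       AConj p0 p1 s b \<Rightarrow> S' = fst (last h) \<union> {(if b then p1 else p0, s)}
     | AAll x p s n \<Rightarrow> S' = fst (last h) \<union> {(p, s(x \<mapsto> n))}
     | ADisj p0 p1 s \<Rightarrow> S' = \<sigma> h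
     | AEx x p s \<Rightarrow> S' = \<sigma> h)"

definition meg_partial ::
  "('f, 'r) fm \<Rightarrow> ('f, 'r) meg_strat \<Rightarrow> (('f, 'r) meg_pos \<times> ('f, 'r) amove) list \<Rightarrow> bool" where
  "meg_partial \<phi> \<sigma> h \<longleftrightarrow> h \<noteq> [] \<and> fst (h ! 0) = {(\<phi>, Map.empty)} \<and>
     (\<forall>i < length h. meg_abelard_ok (fst (h ! i)) (snd (h ! i))) \<and>
     (\<forall>i. Suc i < length h \<longrightarrow> meg_step \<sigma> (take (Suc i) h) (fst (h ! Suc i)))"

definition meg_strategy :: "('f, 'r) fm \<Rightarrow> ('f, 'r) meg_strat \<Rightarrow> bool" where
  "meg_strategy \<phi> \<sigma> \<longleftrightarrow>
     (\<forall>h. meg_partial \<phi> \<sigma> h \<and> eloise_demand (snd (last h)) \<longrightarrow>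
        meg_eloise_ok (fst (last h)) (snd (last h)) (\<sigma> h))"

definition meg_play ::
  "('f, 'r) fm \<Rightarrow> ('f, 'r) meg_strat \<Rightarrow> (nat \<Rightarrow> ('f, 'r) meg_pos \<times> ('f, 'r) amove) \<Rightarrow> bool" where
  "meg_play \<phi> \<sigma> P \<longleftrightarrow> (\<forall>k. meg_partial \<phi> \<sigma> (map P [0..<Suc k]))"

text \<open>Abelard's winning condition: a complementary pair of literals.\<close>
definition meg_contra :: "('f, 'r) meg_pos \<Rightarrow> bool" where
  "meg_contra S \<longleftrightarrow> (\<exists>a s s'. (Lit True a, s) \<in> S \<and> (Lit False a, s') \<in> S \<and>
                       (\<forall>x \<in> vars_atom a. s x = s' x))"

definition meg_winning :: "('f, 'r) fm \<Rightarrow> ('f, 'r) meg_strat \<Rightarrow> bool" where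
  "meg_winning \<phi> \<sigma> \<longleftrightarrow> meg_strategy \<phi> \<sigma> \<and>
     (\<forall>P. meg_play \<phi> \<sigma> P \<longrightarrow> (\<forall>k. \<not> meg_contra (fst (P k))))"

end

theory Submission
  imports Defs
begin

fun stepq :: "('f, 'r) meg_pair \<Rightarrow> nat \<Rightarrow> ('f, 'r) meg_pair" where
  "stepq (And p0 p1, s) c = (if c = 0 then p0 else p1, s)"
| "stepq (Or p0 p1, s) c = (if c = 0 then p0 else p1, s)"
| "stepq (All x p, s) c = (p, s(x \<mapsto> c))"
| "stepq (Ex x p, s) c = (p, s(x \<mapsto> c))"
| "stepq (Lit b a, s) c = (Lit b a, s)"

primrec rpr :: "('f, 'r) fm \<Rightarrow> nat list \<Rightarrow> ('f, 'r) meg_pair list" where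
  "rpr \<phi> [] = [(\<phi>, Map.empty)]"
| "rpr \<phi> (c # cs) = rpr \<phi> cs @ [stepq (last (rpr \<phi> cs)) c]"

definition code :: "nat list \<Rightarrow> nat" where
  "code cs = prod_encode (to_nat cs, Suc (sum_list cs))"

definition tr :: "(nat \<Rightarrow> 'a) \<Rightarrow> ('f, 'r) meg_pair \<Rightarrow> ('f, 'r, 'a) eg_pos" where
  "tr v q = (fst q, map_option v \<circ> snd q)"

definition FF :: "('f, 'r) fm \<Rightarrow> ('f, 'r, 'a) eg_strat \<Rightarrow> (nat \<Rightarrow> 'a) \<Rightarrow> nat \<Rightarrow> 'a" where
  "FF \<phi> \<tau> v n = (let cs = from_nat (fst (prod_decode n)) :: nat list in
     if snd (prod_decode n) = Suc (sum_list cs) then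
       (case fst (last (rpr \<phi> cs)) of
          Ex x p \<Rightarrow> the (snd (\<tau> (map (tr v) (rpr \<phi> cs))) x)
        | _ \<Rightarrow> undefined)
     else undefined)"

definition val :: "('f, 'r) fm \<Rightarrow> ('f, 'r, 'a) eg_strat \<Rightarrow> nat \<Rightarrow> 'a" where
  "val \<phi> \<tau> = wfrec less_than (FF \<phi> \<tau>)"

lemma ran_stepq: "ran (snd (stepq q c)) \<subseteq> ran (snd q) \<union> {c}"
proof -
  obtain p s where q: "q = (p, s)" by (cases q)
  show ?thesis unfolding q by (cases p) (auto simp: ran_def)
qed

lemma rpr_ran: "q \<in> set (rpr \<phi> cs) \<Longrightarrow> ran (snd q) \<subseteq> set cs"
proof (induction cs arbitrary: q)
  case Nil then show ?case by simp
next
  case (Cons c cs)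
  have "last (rpr \<phi> cs) \<in> set (rpr \<phi> cs)"
    by (cases cs) auto
  then have "ran (snd (last (rpr \<phi> cs))) \<subseteq> set cs" using Cons.IH by blast
  moreover have "\<And>q'. q' \<in> set (rpr \<phi> cs) \<Longrightarrow> ran (snd q') \<subseteq> set cs" using Cons.IH by blast
  ultimately show ?case using Cons.prems ran_stepq[of "last (rpr \<phi> cs)" c]
    by (auto simp del: ran_map_upd; blast)
qed

lemma code_gt: "c \<in> set cs \<Longrightarrow> c < code cs"
proof -
  assume "c \<in> set cs"
  then have "c \<le> sum_list cs" by (simp add: member_le_sum_list)
  moreover have "Suc (sum_list cs) \<le> code cs" unfolding code_def by (rule le_prod_encode_2)
  ultimately show ?thesis by simp
qed

lemma adm: "adm_wf less_than (FF \<phi> \<tau>)"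
  unfolding adm_wf_def
proof (intro allI impI)
  fix f g :: "nat \<Rightarrow> 'a" and n
  assume H: "\<forall>z. (z, n) \<in> less_than \<longrightarrow> f z = g z"
  define cs where "cs = (from_nat (fst (prod_decode n)) :: nat list)"
  show "FF \<phi> \<tau> f n = FF \<phi> \<tau> g n"
  proof (cases "snd (prod_decode n) = Suc (sum_list cs)")
    case True
    have n: "\<And>c. c \<in> set cs \<Longrightarrow> c < n"
    proof -
      fix c assume "c \<in> set cs"
      then have "c \<le> sum_list cs" by (simp add: member_le_sum_list)
      moreover have "snd (prod_decode n) \<le> n"
        by (metis le_prod_encode_2 prod.collapse prod_decode_inverse)
      ultimately show "c < n" using True by simp
    qed
    have "map (tr f) (rpr \<phi> cs) = map (tr g) (rpr \<phi> cs)"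
    proof (rule map_cong[OF refl])
      fix q assume q: "q \<in> set (rpr \<phi> cs)"
      have "map_option f \<circ> snd q = map_option g \<circ> snd q"
      proof
        fix x show "(map_option f \<circ> snd q) x = (map_option g \<circ> snd q) x"
        proof (cases "snd q x")
          case (Some y)
          then have "y \<in> ran (snd q)" by (auto simp: ran_def)
          with rpr_ran[OF q] have "y < n" using n by blast
          with H Some show ?thesis by simp
        qed simp
      qed
      then show "tr f q = tr g q" by (simp add: tr_def)
    qed
    note eq = this
    show ?thesis unfolding FF_def Let_def cs_def[symmetric] eq ..
  next
    case False
    then show ?thesis unfolding FF_def Let_def cs_def[symmetric] by simp
  qed
qed

lemma val_fix: "val \<phi> \<tau> = FF \<phi> \<tau> (val \<phi> \<tau>)"
  unfolding val_def by (rule wfrec_fixpoint[OF wf_less_than adm])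

lemma val_code: "fst (last (rpr \<phi> cs)) = Ex x p \<Longrightarrow>
   val \<phi> \<tau> (code cs) = the (snd (\<tau> (map (tr (val \<phi> \<tau>)) (rpr \<phi> cs))) x)"
  by (subst val_fix) (simp add: FF_def code_def)


definition good :: "('f, 'r) fm \<Rightarrow> ('f, 'r, 'a) eg_strat \<Rightarrow> nat list \<Rightarrow> ('f, 'r) meg_pair \<Rightarrow> bool" where
  "good \<phi> \<tau> cs q \<longleftrightarrow> last (rpr \<phi> cs) = q \<and> eg_play \<phi> \<tau> (map (tr (val \<phi> \<tau>)) (rpr \<phi> cs))"

definition sig :: "('f, 'r) fm \<Rightarrow> ('f, 'r, 'a) eg_strat \<Rightarrow> ('f, 'r) meg_strat" where
  "sig \<phi> \<tau> h = (let S = fst (last h); v = val \<phi> \<tau> in case snd (last h) of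
     ADisj p0 p1 s \<Rightarrow> (let cs = SOME cs. good \<phi> \<tau> cs (Or p0 p1, s) in
        if \<tau> (map (tr v) (rpr \<phi> cs)) = (p0, map_option v \<circ> s) then S \<union> {(p0, s)} else S \<union> {(p1, s)})
   | AEx x p s \<Rightarrow> (let cs = SOME cs. good \<phi> \<tau> cs (Ex x p, s) in S \<union> {(p, s(x \<mapsto> code cs))})
   | _ \<Rightarrow> S)"

lemma rpr_ne: "rpr \<phi> cs \<noteq> []"
  by (cases cs) auto

lemma eg_play_snoc:
  assumes "eg_play \<phi> \<tau> ps" "eg_next (last ps) q"
    "eg_eloise_turn (fst (last ps)) \<Longrightarrow> q = \<tau> ps"
  shows "eg_play \<phi> \<tau> (ps @ [q])"
proof -
  have ne: "ps \<noteq> []" using assms(1) eg_play_def by blast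
  show ?thesis unfolding eg_play_def
  proof (intro conjI)
    show "ps @ [q] \<noteq> []" by simp
    show "(ps @ [q]) ! 0 = (\<phi>, Map.empty)" using assms(1) ne unfolding eg_play_def
      by (simp add: nth_append)
  next
    show "\<forall>i. Suc i < length (ps @ [q]) \<longrightarrow> eg_next ((ps @ [q]) ! i) ((ps @ [q]) ! Suc i) \<and>
       (eg_eloise_turn (fst ((ps @ [q]) ! i)) \<longrightarrow> (ps @ [q]) ! Suc i = \<tau> (take (Suc i) (ps @ [q])))"
    proof (intro allI impI)
    fix i assume i: "Suc i < length (ps @ [q])"
    show "eg_next ((ps @ [q]) ! i) ((ps @ [q]) ! Suc i) \<and>
       (eg_eloise_turn (fst ((ps @ [q]) ! i)) \<longrightarrow> (ps @ [q]) ! Suc i = \<tau> (take (Suc i) (ps @ [q])))"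
    proof (cases "Suc i < length ps")
      case True
      then show ?thesis using assms(1) unfolding eg_play_def by (simp add: nth_append)
    next
      case False
      then have ii: "i = length ps - 1" "Suc i = length ps" using i by auto
      have l: "ps ! i = last ps" using ne ii by (simp add: last_conv_nth)
      show ?thesis using assms(2,3) ii l by (simp add: nth_append)
    qed
    qed
  qed
qed

lemma tr_upd: "map_option v \<circ> s(x \<mapsto> n) = (map_option v \<circ> s)(x \<mapsto> v n)"
  by (rule ext) simp

lemma good_step:
  assumes "good \<phi> \<tau> cs q"
    "eg_next (tr (val \<phi> \<tau>) q) (tr (val \<phi> \<tau>) (stepq q c))"
    "eg_eloise_turn (fst q) \<Longrightarrow> tr (val \<phi> \<tau>) (stepq q c) = \<tau> (map (tr (val \<phi> \<tau>)) (rpr \<phi> cs))"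
  shows "good \<phi> \<tau> (c # cs) (stepq q c)"
proof -
  have l: "last (map (tr (val \<phi> \<tau>)) (rpr \<phi> cs)) = tr (val \<phi> \<tau>) q"
    using assms(1) rpr_ne[of \<phi> cs] unfolding good_def by (simp add: last_map)
  have "eg_play \<phi> \<tau> (map (tr (val \<phi> \<tau>)) (rpr \<phi> cs) @ [tr (val \<phi> \<tau>) (stepq q c)])"
    apply (rule eg_play_snoc)
    using assms l unfolding good_def by (auto simp: tr_def)
  then show ?thesis using assms(1) unfolding good_def by simp
qed

lemma inv:
  assumes st: "eg_strategy \<phi> \<tau>" and hp: "meg_partial \<phi> (sig \<phi> \<tau>) h"
  shows "k < length h \<Longrightarrow> \<forall>q \<in> fst (h ! k). \<exists>cs. good \<phi> \<tau> cs q"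
proof (induction k)
  case 0
  have "good \<phi> \<tau> [] (\<phi>, Map.empty)"
    unfolding good_def eg_play_def by (auto simp: tr_def)
  then show ?case using hp unfolding meg_partial_def by auto
next
  case (Suc k)
  define v where "v = val \<phi> \<tau>"
  have k: "k < length h" using Suc.prems by simp
  define S where "S = fst (h ! k)"
  have IH: "\<forall>q\<in>S. \<exists>cs. good \<phi> \<tau> cs q" using Suc.IH k S_def by simp
  have lt: "last (take (Suc k) h) = h ! k" using k by (simp add: take_Suc_conv_app_nth)
  have ms: "meg_step (sig \<phi> \<tau>) (take (Suc k) h) (fst (h ! Suc k))"
    using hp Suc.prems unfolding meg_partial_def by blast
  have ok: "meg_abelard_ok S (snd (h ! k))" using hp k unfolding meg_partial_def S_def by blast
  show ?case
  proof (cases "snd (h ! k)")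
    case (AConj p0 p1 s b)
    have new: "fst (h ! Suc k) = S \<union> {(if b then p1 else p0, s)}"
      using ms lt AConj S_def unfolding meg_step_def by simp
    from ok AConj IH obtain cs where g: "good \<phi> \<tau> cs (And p0 p1, s)" by auto
    have "good \<phi> \<tau> ((if b then 1 else 0) # cs) (stepq (And p0 p1, s) (if b then 1 else 0))"
      by (rule good_step[OF g]) (auto simp: tr_def)
    then have "good \<phi> \<tau> ((if b then 1 else 0) # cs) (if b then p1 else p0, s)" by (cases b) auto
    then show ?thesis using new IH by auto
  next
    case (AAll x p s n)
    have new: "fst (h ! Suc k) = S \<union> {(p, s(x \<mapsto> n))}"
      using ms lt AAll S_def unfolding meg_step_def by simp
    from ok AAll IH obtain cs where g: "good \<phi> \<tau> cs (All x p, s)" by auto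
    have "good \<phi> \<tau> (n # cs) (stepq (All x p, s) n)"
      by (rule good_step[OF g]) (auto simp: tr_def tr_upd)
    then show ?thesis using new IH by auto
  next
    case (ADisj p0 p1 s)
    define cs where "cs = (SOME cs. good \<phi> \<tau> cs (Or p0 p1, s))"
    from ok ADisj IH have "\<exists>cs. good \<phi> \<tau> cs (Or p0 p1, s)" by auto
    then have g: "good \<phi> \<tau> cs (Or p0 p1, s)" unfolding cs_def by (rule someI_ex)
    define ps where "ps = map (tr v) (rpr \<phi> cs)"
    have l: "last ps = (Or p0 p1, map_option v \<circ> s)"
      using g rpr_ne[of \<phi> cs] unfolding good_def ps_def by (simp add: last_map tr_def)
    have "eg_play \<phi> \<tau> ps" using g unfolding good_def ps_def v_def by simp
    then have nx: "eg_next (last ps) (\<tau> ps)" using st[unfolded eg_strategy_def, rule_format, of ps] l by simp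
    have new: "fst (h ! Suc k) = (if \<tau> ps = (p0, map_option v \<circ> s) then S \<union> {(p0, s)} else S \<union> {(p1, s)})"
      using ms lt ADisj S_def unfolding meg_step_def sig_def Let_def ps_def cs_def v_def by simp
    show ?thesis
    proof (cases "\<tau> ps = (p0, map_option v \<circ> s)")
      case True
      have "good \<phi> \<tau> (0 # cs) (stepq (Or p0 p1, s) 0)"
        by (rule good_step[OF g]) (use True in \<open>auto simp: tr_def ps_def v_def\<close>)
      then show ?thesis using new IH True by auto
    next
      case False
      with nx l have T: "\<tau> ps = (p1, map_option v \<circ> s)" by auto
      have "good \<phi> \<tau> (1 # cs) (stepq (Or p0 p1, s) 1)"
        by (rule good_step[OF g]) (use T in \<open>auto simp: tr_def ps_def v_def\<close>)
      then show ?thesis using new IH False by auto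
    qed
  next
    case (AEx x p s)
    define cs where "cs = (SOME cs. good \<phi> \<tau> cs (Ex x p, s))"
    from ok AEx IH have "\<exists>cs. good \<phi> \<tau> cs (Ex x p, s)" by auto
    then have g: "good \<phi> \<tau> cs (Ex x p, s)" unfolding cs_def by (rule someI_ex)
    define ps where "ps = map (tr v) (rpr \<phi> cs)"
    have l: "last ps = (Ex x p, map_option v \<circ> s)"
      using g rpr_ne[of \<phi> cs] unfolding good_def ps_def by (simp add: last_map tr_def)
    have "eg_play \<phi> \<tau> ps" using g unfolding good_def ps_def v_def by simp
    then have nx: "eg_next (last ps) (\<tau> ps)" using st[unfolded eg_strategy_def, rule_format, of ps] l by simp
    then obtain a where a: "\<tau> ps = (p, (map_option v \<circ> s)(x \<mapsto> a))" using l by auto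
    have vc: "v (code cs) = a"
      using val_code[of \<phi> cs x p \<tau>] g a unfolding good_def ps_def v_def by simp
    have new: "fst (h ! Suc k) = S \<union> {(p, s(x \<mapsto> code cs))}"
      using ms lt AEx S_def unfolding meg_step_def sig_def Let_def cs_def by simp
    have "good \<phi> \<tau> (code cs # cs) (stepq (Ex x p, s) (code cs))"
      by (rule good_step[OF g]) (use a vc in \<open>auto simp: tr_def tr_upd ps_def v_def\<close>)
    then show ?thesis using new IH by auto
  qed
qed

lemma eval_cong: "(\<forall>x\<in>vars_tm t. s x = s' x) \<Longrightarrow> eval_tm M s t = eval_tm M s' t"
  by (induction t) (auto intro!: arg_cong2[where f="fun_of M"] map_cong)

lemma holds_cong: assumes that: "\<forall>x\<in>vars_atom a. s x = s' x" shows "holds_atom M s a = holds_atom M s' a"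
proof (cases a)
  case (Eq t u) then show ?thesis using that eval_cong[of t s s' M] eval_cong[of u s s' M] by simp
next
  case (Rel r ts)
  then have "map (eval_tm M s) ts = map (eval_tm M s') ts" using that eval_cong[of _ s s' M]
    by (auto intro!: map_cong)
  then show ?thesis using Rel by (metis holds_atom.simps(2))
qed

theorem theorem2:
  fixes M :: "('f::countable, 'r::countable, 'a) struc"
    and \<phi> :: "('f, 'r) fm"
  assumes "sentence \<phi>"
  shows "\<exists>\<Phi> :: ('f, 'r, 'a) eg_strat \<Rightarrow> ('f, 'r) meg_strat.
           \<forall>\<tau>. eg_strategy \<phi> \<tau> \<longrightarrow>
                 meg_strategy \<phi> (\<Phi> \<tau>) \<and>
                 (eg_winning M \<phi> \<tau> \<longrightarrow> meg_winning \<phi> (\<Phi> \<tau>))"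
proof (intro exI[of _ "sig \<phi>"] allI impI conjI)
  fix \<tau> :: "('f, 'r, 'a) eg_strat"
  assume st: "eg_strategy \<phi> \<tau>"
  show ms: "meg_strategy \<phi> (sig \<phi> \<tau>)"
    unfolding meg_strategy_def
  proof (intro allI impI)
    fix h assume "meg_partial \<phi> (sig \<phi> \<tau>) h \<and> eloise_demand (snd (last h))"
    then show "meg_eloise_ok (fst (last h)) (snd (last h)) (sig \<phi> \<tau> h)"
      by (cases "snd (last h)") (auto simp: sig_def Let_def)
  qed
  assume w: "eg_winning M \<phi> \<tau>"
  show "meg_winning \<phi> (sig \<phi> \<tau>)"
    unfolding meg_winning_def
  proof (intro conjI ms allI impI notI)
    fix P k assume pl: "meg_play \<phi> (sig \<phi> \<tau>) P" and c: "meg_contra (fst (P k))"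
    have "meg_partial \<phi> (sig \<phi> \<tau>) (map P [0..<Suc k])" using pl meg_play_def by blast
    from inv[OF st this, of k] have I: "\<forall>q\<in>fst (P k). \<exists>cs. good \<phi> \<tau> cs q"
      by (simp del: upt_Suc)
    from c obtain a s s' where A: "(Lit True a, s) \<in> fst (P k)" "(Lit False a, s') \<in> fst (P k)"
      "\<forall>x \<in> vars_atom a. s x = s' x" unfolding meg_contra_def by blast
    define v where "v = val \<phi> \<tau>"
    from I A obtain cs1 cs2 where g1: "good \<phi> \<tau> cs1 (Lit True a, s)"
      and g2: "good \<phi> \<tau> cs2 (Lit False a, s')" by blast
    have "\<And>cs b s. good \<phi> \<tau> cs (Lit b a, s) \<Longrightarrow> b = holds_atom M (map_option v \<circ> s) a"
    proof -
      fix cs b s assume g: "good \<phi> \<tau> cs (Lit b a, s)"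
      have "last (map (tr v) (rpr \<phi> cs)) = (Lit b a, map_option v \<circ> s)"
        using g rpr_ne[of \<phi> cs] unfolding good_def by (simp add: last_map tr_def)
      moreover have "eg_play \<phi> \<tau> (map (tr v) (rpr \<phi> cs))" using g unfolding good_def v_def by simp
      ultimately show "b = holds_atom M (map_option v \<circ> s) a"
        using w unfolding eg_winning_def by (metis fst_conv snd_conv)
    qed
    from this[OF g1] this[OF g2] holds_cong[of a "map_option v \<circ> s" "map_option v \<circ> s'" M] A(3)
    show False by simp
  qed
qed

end
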